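(* Let $K\subset\mathbb{R}$ be a real cubic number field with norm map $N=N_{K/\mathbb{Q}}$. Let $p,q$ be positive integers with $\gcd(p,q)=1$ and $p\not\equiv 0 \pmod 3$. Then for all $\alpha,\beta\in K\setminus\mathbb{Q}$ with $\alpha,\beta>0$, \[ \frac{|N(\alpha)|}{\alpha^{p/q}}=\frac{|N(\beta)|}{\beta^{p/q}}\quad\text{implies}\quad \alpha=\beta . \]
   Context: Here $\alpha^{p/q}$ denotes the positive real $(p/q)$-th power of the positive real number $\alpha$. *)

theory Defs
  imports "HOL-Analysis.Analysis"
begin

definition real_subfield :: "real set \<Rightarrow> bool" where
  "real_subfield K \<longleftrightarrow> 0 \<in> K \<and> 1 \<in> K \<and>
     (\<forall>x\<in>K. \<forall>y\<in>K. x + y \<in> K \<and> x * y \<in> K) \<and>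
     (\<forall>x\<in>K. - x \<in> K) \<and> (\<forall>x\<in>K. x \<noteq> 0 \<longrightarrow> inverse x \<in> K)"

definition is_Q_basis :: "real set \<Rightarrow> (3 \<Rightarrow> real) \<Rightarrow> bool" where
  "is_Q_basis K b \<longleftrightarrow> (\<forall>i. b i \<in> K) \<and>
     (\<forall>x\<in>K. \<exists>!c :: 3 \<Rightarrow> real. (\<forall>i. c i \<in> \<rat>) \<and> x = (\<Sum>i\<in>UNIV. c i * b i))"

definition real_cubic_field :: "real set \<Rightarrow> bool" where
  "real_cubic_field K \<longleftrightarrow> real_subfield K \<and> (\<exists>b. is_Q_basis K b)"

text \<open>The field norm N_{K/Q}(a): determinant of the Q-linear map x \<mapsto> a x on K,
  computed in a Q-basis of K.\<close>
definition field_norm :: "real set \<Rightarrow> real \<Rightarrow> real" where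
  "field_norm K a = (THE r. \<exists>b (M :: real^3^3). is_Q_basis K b \<and> (\<forall>i j. M $ i $ j \<in> \<rat>) \<and>
       (\<forall>i. a * b i = (\<Sum>j\<in>UNIV. M $ i $ j * b j)) \<and> r = det M)"

end

theory Submission
  imports Defs
begin

lemma sum_subst_basis:
  fixes c :: "'n::finite \<Rightarrow> real" and P :: "'n \<Rightarrow> 'm::finite \<Rightarrow> real"
  shows "(\<Sum>j\<in>UNIV. c j * (\<Sum>k\<in>UNIV. P j k * b k)) = (\<Sum>k\<in>UNIV. (\<Sum>j\<in>UNIV. c j * P j k) * b k)"
  by (simp add: sum_distrib_left sum_distrib_right mult.assoc sum.swap[of _ "UNIV::'n set"])

lemma det_Rats: "(\<forall>i j. (M::real^'n^'n) $ i $ j \<in> \<rat>) \<Longrightarrow> det M \<in> \<rat>"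
  unfolding det_def by (intro Rats_sum Rats_mult Rats_prod) (auto simp: Rats_of_int)

lemma subfield_pow: "real_subfield K \<Longrightarrow> x \<in> K \<Longrightarrow> x ^ n \<in> K"
  by (induction n) (auto simp: real_subfield_def)

locale qbasis =
  fixes K :: "real set" and b :: "3 \<Rightarrow> real"
  assumes sub: "real_subfield K" and bas: "is_Q_basis K b"
begin

lemma uniq:
  assumes "x \<in> K" "\<forall>i. c i \<in> \<rat>" "\<forall>i. d i \<in> \<rat>"
    "x = (\<Sum>i\<in>UNIV. c i * b i)" "x = (\<Sum>i\<in>UNIV. d i * b i)"
  shows "c = d"
proof -
  have "\<exists>!c. (\<forall>i. c i \<in> \<rat>) \<and> x = (\<Sum>i\<in>UNIV. c i * b i)"
    using bas assms(1) unfolding is_Q_basis_def by blast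
  then show ?thesis using assms(2-5) by blast
qed

definition coord :: "real \<Rightarrow> 3 \<Rightarrow> real" where
  "coord x = (SOME c. (\<forall>i. c i \<in> \<rat>) \<and> x = (\<Sum>i\<in>UNIV. c i * b i))"

lemma coord:
  assumes "x \<in> K"
  shows "\<forall>i. coord x i \<in> \<rat>" "x = (\<Sum>i\<in>UNIV. coord x i * b i)"
proof -
  have "\<exists>c. (\<forall>i. c i \<in> \<rat>) \<and> x = (\<Sum>i\<in>UNIV. c i * b i)"
    using bas assms unfolding is_Q_basis_def by blast
  then have "(\<forall>i. coord x i \<in> \<rat>) \<and> x = (\<Sum>i\<in>UNIV. coord x i * b i)"
    unfolding coord_def by (rule someI_ex)
  then show "\<forall>i. coord x i \<in> \<rat>" "x = (\<Sum>i\<in>UNIV. coord x i * b i)" by auto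
qed

lemma bK: "b i \<in> K" using bas unfolding is_Q_basis_def by auto

lemma mulK: "x \<in> K \<Longrightarrow> y \<in> K \<Longrightarrow> x * y \<in> K"
  using sub unfolding real_subfield_def by auto

definition mo :: "real \<Rightarrow> real^3^3" where
  "mo a = (\<chi> i j. coord (a * b i) j)"

lemma mo:
  assumes "a \<in> K"
  shows "\<forall>i j. mo a $ i $ j \<in> \<rat>" "\<forall>i. a * b i = (\<Sum>j\<in>UNIV. mo a $ i $ j * b j)"
  using coord[OF mulK[OF assms bK]] by (auto simp: mo_def)

lemma mo_uniq:
  assumes "a \<in> K" "\<forall>i j. M $ i $ j \<in> \<rat>" "\<forall>i. a * b i = (\<Sum>j\<in>UNIV. M $ i $ j * b j)"
  shows "M = mo a"
proof -
  have "\<And>i. (\<lambda>j. M $ i $ j) = (\<lambda>j. mo a $ i $ j)"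
    by (rule uniq[OF mulK[OF assms(1) bK]]) (use assms mo[OF assms(1)] in auto)
  then show ?thesis by (simp add: vec_eq_iff fun_eq_iff)
qed

lemma mo_mult:
  assumes "x \<in> K" "y \<in> K"
  shows "mo (x * y) = mo y ** mo x"
proof (rule sym, rule mo_uniq)
  show "x * y \<in> K" using assms mulK by auto
  show "\<forall>i j. (mo y ** mo x) $ i $ j \<in> \<rat>"
    using mo assms by (auto simp: matrix_matrix_mult_def intro!: Rats_sum Rats_mult)
  show "\<forall>i. x * y * b i = (\<Sum>j\<in>UNIV. (mo y ** mo x) $ i $ j * b j)"
  proof
    fix i
    have "x * y * b i = x * (\<Sum>j\<in>UNIV. mo y $ i $ j * b j)" using mo(2)[OF assms(2)] by simp
    also have "\<dots> = (\<Sum>j\<in>UNIV. mo y $ i $ j * (x * b j))"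
      by (simp add: sum_distrib_left mult_ac)
    also have "\<dots> = (\<Sum>j\<in>UNIV. mo y $ i $ j * (\<Sum>k\<in>UNIV. mo x $ j $ k * b k))"
      using mo(2)[OF assms(1)] by simp
    also have "\<dots> = (\<Sum>k\<in>UNIV. (mo y ** mo x) $ i $ k * b k)"
      by (subst sum_subst_basis) (simp add: matrix_matrix_mult_def)
    finally show "x * y * b i = (\<Sum>j\<in>UNIV. (mo y ** mo x) $ i $ j * b j)" .
  qed
qed

lemma mo_rat:
  assumes "r \<in> K" "r \<in> \<rat>"
  shows "det (mo r) = r ^ 3"
proof -
  have "mo r = (\<chi> i j. if i = j then r else 0)"
  proof (rule sym, rule mo_uniq[OF assms(1)])
    show "\<forall>i j. (\<chi> i j. if i = j then r else 0) $ i $ j \<in> \<rat>" using assms by auto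
    show "\<forall>i. r * b i = (\<Sum>j\<in>UNIV. (\<chi> i j. if i = j then r else (0::real)) $ i $ j * b j)"
    proof
      fix i
      have eqf: "(\<lambda>j. (\<chi> i j. if i = j then r else (0::real)) $ i $ j * b j) = (\<lambda>j. if i = j then r * b j else 0)"
        by auto
      then show "r * b i = (\<Sum>j\<in>UNIV. (\<chi> i j. if i = j then r else (0::real)) $ i $ j * b j)"
        by (simp only: eqf) simp
    qed
  qed
  then show ?thesis by (simp add: det_diagonal)
qed

end

lemma norm_indep:
  assumes "qbasis K b" "qbasis K b'" "a \<in> K"
    "\<forall>i j. M' $ i $ j \<in> \<rat>" "\<forall>i. a * b' i = (\<Sum>j\<in>UNIV. M' $ i $ j * b' j)"
  shows "det M' = det (qbasis.mo b a)"
proof -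
  interpret B: qbasis K b by fact
  interpret B': qbasis K b' by fact
  define P :: "real^3^3" where "P = (\<chi> i j. B.coord (b' i) j)"
  define Q :: "real^3^3" where "Q = (\<chi> i j. B'.coord (b i) j)"
  have Pr: "\<forall>i j. P $ i $ j \<in> \<rat>" using B.coord B'.bK by (auto simp: P_def)
  have Qr: "\<forall>i j. Q $ i $ j \<in> \<rat>" using B'.coord B.bK by (auto simp: Q_def)
  have Pe: "\<And>i. b' i = (\<Sum>j\<in>UNIV. P $ i $ j * b j)" using B.coord B'.bK by (auto simp: P_def)
  have Qe: "\<And>i. b i = (\<Sum>j\<in>UNIV. Q $ i $ j * b' j)" using B'.coord B.bK by (auto simp: Q_def)
  have PQ: "P ** Q = mat 1"
  proof -
    have "\<And>i. (\<lambda>k. (P ** Q) $ i $ k) = (\<lambda>k. mat 1 $ i $ k)"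
    proof -
      fix i
      have e1: "b' i = (\<Sum>k\<in>UNIV. (P ** Q) $ i $ k * b' k)"
        apply (subst Pe) apply (subst Qe)
        by (subst sum_subst_basis) (simp add: matrix_matrix_mult_def)
      have eqf: "(\<lambda>k. mat 1 $ i $ k * b' k) = (\<lambda>k. if i = k then b' k else 0)"
        by (auto simp: mat_def)
      then have e2: "b' i = (\<Sum>k\<in>UNIV. mat 1 $ i $ k * b' k)"
        by (simp only: eqf) simp
      show "(\<lambda>k. (P ** Q) $ i $ k) = (\<lambda>k. mat 1 $ i $ k)"
        apply (rule B'.uniq[OF B'.bK _ _ e1 e2])
        using Pr Qr by (auto simp: matrix_matrix_mult_def mat_def intro!: Rats_sum Rats_mult)
    qed
    then show ?thesis by (simp add: vec_eq_iff fun_eq_iff)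
  qed
  have dP: "det P \<noteq> 0" using PQ det_mul[of P Q] by auto
  let ?M = "B.mo a"
  have MP: "M' ** P = P ** ?M"
  proof -
    have "\<And>i. (\<lambda>k. (M' ** P) $ i $ k) = (\<lambda>k. (P ** ?M) $ i $ k)"
    proof -
      fix i
      have e1: "a * b' i = (\<Sum>k\<in>UNIV. (M' ** P) $ i $ k * b k)"
        apply (subst assms(5)[rule_format]) apply (subst Pe)
        by (subst sum_subst_basis) (simp add: matrix_matrix_mult_def)
      have "a * b' i = (\<Sum>j\<in>UNIV. P $ i $ j * (a * b j))"
        by (subst Pe) (simp add: sum_distrib_left mult_ac)
      also have "\<dots> = (\<Sum>j\<in>UNIV. P $ i $ j * (\<Sum>k\<in>UNIV. ?M $ j $ k * b k))"
        using B.mo(2)[OF assms(3)] by simp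
      also have "\<dots> = (\<Sum>k\<in>UNIV. (P ** ?M) $ i $ k * b k)"
        by (subst sum_subst_basis) (simp add: matrix_matrix_mult_def)
      finally have e2: "a * b' i = (\<Sum>k\<in>UNIV. (P ** ?M) $ i $ k * b k)" .
      show "(\<lambda>k. (M' ** P) $ i $ k) = (\<lambda>k. (P ** ?M) $ i $ k)"
        apply (rule B.uniq[OF B.mulK[OF assms(3) B'.bK] _ _ e1 e2])
        using Pr assms(4) B.mo(1)[OF assms(3)]
        by (auto simp: matrix_matrix_mult_def intro!: Rats_sum Rats_mult)
    qed
    then show ?thesis by (simp add: vec_eq_iff fun_eq_iff)
  qed
  have "det M' * det P = det P * det ?M" using arg_cong[OF MP, of det] by (simp add: det_mul)
  then show ?thesis using dP by simp
qed

lemma field_norm_eq: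
  assumes "qbasis K b" "a \<in> K"
  shows "field_norm K a = det (qbasis.mo b a)"
  unfolding field_norm_def
proof (rule the_equality)
  interpret B: qbasis K b by fact
  show "\<exists>b' M. is_Q_basis K b' \<and> (\<forall>i j. M $ i $ j \<in> \<rat>) \<and>
       (\<forall>i. a * b' i = (\<Sum>j\<in>UNIV. M $ i $ j * b' j)) \<and> det (B.mo a) = det M"
    using B.bas B.mo[OF assms(2)] by blast
  fix r assume "\<exists>b' (M::real^3^3). is_Q_basis K b' \<and> (\<forall>i j. M $ i $ j \<in> \<rat>) \<and>
       (\<forall>i. a * b' i = (\<Sum>j\<in>UNIV. M $ i $ j * b' j)) \<and> r = det M"
  then obtain b' M where h: "is_Q_basis K b'" "\<forall>i j. M $ i $ j \<in> \<rat>"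
       "\<forall>i. a * b' i = (\<Sum>j\<in>UNIV. M $ i $ j * b' j)" "r = det M" by blast
  have "qbasis K b'" using h(1) B.sub by (simp add: qbasis_def)
  then show "r = det (B.mo a)" using norm_indep[OF assms(1) _ assms(2) h(2,3)] h(4) by simp
qed

theorem lemma2p1:
  fixes K :: "real set" and p q :: nat and \<alpha> \<beta> :: real
  assumes "real_cubic_field K"
    and "p > 0" and "q > 0" and "coprime p q" and "\<not> (3 dvd p)"
    and "\<alpha> \<in> K" and "\<alpha> \<notin> \<rat>" and "\<beta> \<in> K" and "\<beta> \<notin> \<rat>"
    and "\<alpha> > 0" and "\<beta> > 0"
    and "\<bar>field_norm K \<alpha>\<bar> / \<alpha> powr (real p / real q)
         = \<bar>field_norm K \<beta>\<bar> / \<beta> powr (real p / real q)"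
  shows "\<alpha> = \<beta>"
proof -
  obtain b where sub: "real_subfield K" and bas: "is_Q_basis K b"
    using assms(1) unfolding real_cubic_field_def by blast
  interpret B: qbasis K b using sub bas by (simp add: qbasis_def)
  have one: "1 \<in> K" using sub by (simp add: real_subfield_def)
  have N: "\<And>x. x \<in> K \<Longrightarrow> field_norm K x = det (B.mo x)"
    using field_norm_eq[OF B.qbasis_axioms] by blast
  have Nmul: "\<And>x y. x \<in> K \<Longrightarrow> y \<in> K \<Longrightarrow> det (B.mo (x*y)) = det (B.mo x) * det (B.mo y)"
    using B.mo_mult by (simp add: det_mul)
  have N1: "det (B.mo 1) = 1" using B.mo_rat[OF one] by simp
  have Npow: "\<And>x n. x \<in> K \<Longrightarrow> det (B.mo (x^n)) = det (B.mo x) ^ n"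
  proof -
    fix x n assume x: "x \<in> K"
    show "det (B.mo (x^n)) = det (B.mo x) ^ n"
    proof (induction n)
      case 0 then show ?case using N1 by simp
    next
      case (Suc n) then show ?case
        using Nmul[OF x subfield_pow[OF sub x, of n]] by simp
    qed
  qed
  have ib: "inverse \<beta> \<in> K" using sub assms(8,11) by (simp add: real_subfield_def)
  define g where "g = \<alpha> * inverse \<beta>"
  have gK: "g \<in> K" using B.mulK[OF assms(6) ib] g_def by simp
  have gpos: "g > 0" using assms(10,11) g_def by simp
  have ag: "\<alpha> = g * \<beta>" using assms(11) g_def by simp
  have "det (B.mo (\<beta> * inverse \<beta>)) = 1" using assms(11) N1 by simp
  then have Nb: "det (B.mo \<beta>) \<noteq> 0" using Nmul[OF assms(8) ib] by auto
  define e where "e = real p / real q"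
  have "\<bar>det (B.mo g) * det (B.mo \<beta>)\<bar> / (g powr e * \<beta> powr e) = \<bar>det (B.mo \<beta>)\<bar> / \<beta> powr e"
    using assms(12) N[OF assms(6)] N[OF assms(8)] Nmul[OF gK assms(8)] ag gpos assms(11)
    by (simp add: e_def powr_mult)
  then have Ng: "\<bar>det (B.mo g)\<bar> = g powr e"
    using Nb gpos assms(11) by (simp add: abs_mult field_simps)
  have "g ^ p = (g powr e) ^ q"
    using gpos assms(3) by (simp add: e_def powr_realpow[symmetric] powr_powr)
  also have "\<dots> = \<bar>det (B.mo g)\<bar> ^ q" using Ng by simp
  finally have gp: "g ^ p = \<bar>det (B.mo g)\<bar> ^ q" .
  have "det (B.mo g) \<in> \<rat>" using det_Rats B.mo(1)[OF gK] by blast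
  then have "\<bar>det (B.mo g)\<bar> \<in> \<rat>" by (simp add: abs_if)
  then have "g ^ p \<in> \<rat>" using gp by simp
  then have "det (B.mo (g ^ p)) = (g ^ p) ^ 3" using B.mo_rat subfield_pow[OF sub gK] by blast
  then have "det (B.mo g) ^ p = (g ^ 3) ^ p"
    using Npow[OF gK, of p] by (simp add: power_mult[symmetric] mult.commute)
  then have "\<bar>det (B.mo g)\<bar> ^ p = (g ^ 3) ^ p"
    using gpos by (simp add: power_abs[symmetric])
  then have "\<bar>det (B.mo g)\<bar> = g ^ 3"
    by (rule power_eq_imp_eq_base) (use assms(2) gpos in auto)
  then have "g powr e = g powr 3" using Ng gpos by (simp add: powr_realpow)
  moreover have "e \<noteq> 3"
  proof
    assume "e = 3"
    then have "real p = 3 * real q" using assms(3) by (simp add: e_def field_simps)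
    then have "p = 3 * q" by linarith
    then show False using assms(5) by simp
  qed
  ultimately have "g = 1" using gpos powr_inj[of g e 3] by blast
  then show ?thesis using ag by simp
qed

end
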